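(* Let $G$ be a $P_5$-free graph that is minimally non-perfectly divisible. Then $G$ does not contain a clique cutset.
   Context: All graphs are finite and simple. For $S\subseteq V(G)$, $G[S]$ is the subgraph induced by $S$. $\omega(G)$ is the number of vertices in a largest clique of $G$ and $\chi(G)$ the chromatic number. A graph $G$ is perfect if $\chi(H)=\omega(H)$ for every induced subgraph $H$ of $G$. A partition $(A,B)$ of $V(G)$ is good if $G[A]$ is perfect and $\omega(G[B])<\omega(G)$. A graph $G$ is perfectly divisible if every induced subgraph $H$ of $G$ with at least one edge admits a good partition (of $V(H)$). A graph is minimally non-perfectly divisible if it is not perfectly divisible but each of its proper induced subgraphs is perfectly divisible. A set $C\subseteq V(G)$ is a clique cutset if $C$ induces a clique in $G$ and $G-C$ is disconnected. $P_5$ is the chordless path on five vertices; $G$ is $P_5$-free if it has no induced subgraph isomorphic to $P_5$. *)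

theory Defs
  imports Main
begin

text \<open>A finite simple graph is given by a finite vertex set V and an adjacency
relation E that is symmetric and irreflexive. The induced subgraph G[S] for S a
subset of V is represented by the pair (S, E).\<close>

definition simple_graph :: "'a set \<Rightarrow> ('a \<Rightarrow> 'a \<Rightarrow> bool) \<Rightarrow> bool" where
  "simple_graph V E \<longleftrightarrow> finite V \<and> (\<forall>x y. E x y \<longrightarrow> E y x) \<and> (\<forall>x. \<not> E x x)"

definition is_clique :: "('a \<Rightarrow> 'a \<Rightarrow> bool) \<Rightarrow> 'a set \<Rightarrow> bool" where
  "is_clique E K \<longleftrightarrow> (\<forall>x\<in>K. \<forall>y\<in>K. x \<noteq> y \<longrightarrow> E x y)"

definition clique_number :: "'a set \<Rightarrow> ('a \<Rightarrow> 'a \<Rightarrow> bool) \<Rightarrow> nat" where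
  "clique_number S E = Max {card K | K. K \<subseteq> S \<and> is_clique E K}"

definition proper_colouring :: "'a set \<Rightarrow> ('a \<Rightarrow> 'a \<Rightarrow> bool) \<Rightarrow> nat \<Rightarrow> ('a \<Rightarrow> nat) \<Rightarrow> bool" where
  "proper_colouring S E k f \<longleftrightarrow>
     (\<forall>x\<in>S. f x < k) \<and> (\<forall>x\<in>S. \<forall>y\<in>S. E x y \<longrightarrow> f x \<noteq> f y)"

definition chromatic_number :: "'a set \<Rightarrow> ('a \<Rightarrow> 'a \<Rightarrow> bool) \<Rightarrow> nat" where
  "chromatic_number S E = (LEAST k. \<exists>f. proper_colouring S E k f)"

definition perfect :: "'a set \<Rightarrow> ('a \<Rightarrow> 'a \<Rightarrow> bool) \<Rightarrow> bool" where
  "perfect S E \<longleftrightarrow> (\<forall>H \<subseteq> S. chromatic_number H E = clique_number H E)"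

definition good_partition :: "'a set \<Rightarrow> ('a \<Rightarrow> 'a \<Rightarrow> bool) \<Rightarrow> 'a set \<Rightarrow> 'a set \<Rightarrow> bool" where
  "good_partition S E A B \<longleftrightarrow>
     A \<union> B = S \<and> A \<inter> B = {} \<and> perfect A E \<and> clique_number B E < clique_number S E"

definition has_edge :: "'a set \<Rightarrow> ('a \<Rightarrow> 'a \<Rightarrow> bool) \<Rightarrow> bool" where
  "has_edge S E \<longleftrightarrow> (\<exists>x\<in>S. \<exists>y\<in>S. E x y)"

definition perfectly_divisible :: "'a set \<Rightarrow> ('a \<Rightarrow> 'a \<Rightarrow> bool) \<Rightarrow> bool" where
  "perfectly_divisible S E \<longleftrightarrow>
     (\<forall>H \<subseteq> S. has_edge H E \<longrightarrow> (\<exists>A B. good_partition H E A B))"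

definition minimally_non_pd :: "'a set \<Rightarrow> ('a \<Rightarrow> 'a \<Rightarrow> bool) \<Rightarrow> bool" where
  "minimally_non_pd S E \<longleftrightarrow>
     \<not> perfectly_divisible S E \<and> (\<forall>H. H \<subset> S \<longrightarrow> perfectly_divisible H E)"

definition induced_P5 :: "'a set \<Rightarrow> ('a \<Rightarrow> 'a \<Rightarrow> bool) \<Rightarrow> bool" where
  "induced_P5 S E \<longleftrightarrow> (\<exists>v :: nat \<Rightarrow> 'a.
     (\<forall>i<5. v i \<in> S) \<and> inj_on v {0..<5} \<and>
     (\<forall>i<5. \<forall>j<5. E (v i) (v j) \<longleftrightarrow> (i = j + 1 \<or> j = i + 1)))"

definition P5_free :: "'a set \<Rightarrow> ('a \<Rightarrow> 'a \<Rightarrow> bool) \<Rightarrow> bool" where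
  "P5_free S E \<longleftrightarrow> \<not> induced_P5 S E"

definition connected_in :: "'a set \<Rightarrow> ('a \<Rightarrow> 'a \<Rightarrow> bool) \<Rightarrow> 'a \<Rightarrow> 'a \<Rightarrow> bool" where
  "connected_in S E x y \<longleftrightarrow> (\<lambda>a b. a \<in> S \<and> b \<in> S \<and> E a b)\<^sup>*\<^sup>* x y"

definition disconnected :: "'a set \<Rightarrow> ('a \<Rightarrow> 'a \<Rightarrow> bool) \<Rightarrow> bool" where
  "disconnected S E \<longleftrightarrow> (\<exists>x\<in>S. \<exists>y\<in>S. \<not> connected_in S E x y)"

definition clique_cutset :: "'a set \<Rightarrow> ('a \<Rightarrow> 'a \<Rightarrow> bool) \<Rightarrow> 'a set \<Rightarrow> bool" where
  "clique_cutset S E C \<longleftrightarrow> C \<subseteq> S \<and> is_clique E C \<and> disconnected (S - C) E"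

end

theory Submission
  imports Defs
begin

lemma cn_fin: "finite S \<Longrightarrow> finite {card K | K. K \<subseteq> S \<and> is_clique E K}"
  by (rule finite_subset[of _ "card ` Pow S"]) auto

lemma cn_ge: "finite S \<Longrightarrow> K \<subseteq> S \<Longrightarrow> is_clique E K \<Longrightarrow> card K \<le> clique_number S E"
  unfolding clique_number_def by (rule Max_ge[OF cn_fin]) auto

lemma cn_ex: assumes "finite S" shows "\<exists>K. K \<subseteq> S \<and> is_clique E K \<and> card K = clique_number S E"
proof -
  have "{} \<subseteq> S \<and> is_clique E {}" by (simp add: is_clique_def)
  then have ne: "{card K | K. K \<subseteq> S \<and> is_clique E K} \<noteq> {}" by blast
  show ?thesis using Max_in[OF cn_fin[OF assms] ne] unfolding clique_number_def by auto
qed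

lemma cn_mono: "finite T \<Longrightarrow> S \<subseteq> T \<Longrightarrow> clique_number S E \<le> clique_number T E"
  by (metis cn_ex cn_ge finite_subset order_trans)

lemma clique_sub: "is_clique E K \<Longrightarrow> K' \<subseteq> K \<Longrightarrow> is_clique E K'"
  unfolding is_clique_def by blast

lemma col_clique:
  assumes "proper_colouring S E k f" "K \<subseteq> S" "is_clique E K" "finite K"
  shows "card K \<le> k"
proof -
  have "inj_on f K" using assms unfolding proper_colouring_def is_clique_def inj_on_def by blast
  moreover have "f ` K \<subseteq> {0..<k}" using assms unfolding proper_colouring_def by auto
  ultimately show ?thesis by (metis card_atLeastLessThan card_image card_mono diff_zero finite_atLeastLessThan)
qed

lemma chi_le: "proper_colouring S E k f \<Longrightarrow> chromatic_number S E \<le> k"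
  unfolding chromatic_number_def by (rule Least_le) blast

lemma chi_ex:
  assumes "finite S" "\<forall>x. \<not> E x x"
  shows "\<exists>f. proper_colouring S E (chromatic_number S E) f"
proof -
  obtain h where h: "bij_betw h S {0..<card S}" using ex_bij_betw_finite_nat[OF assms(1)] by blast
  have "proper_colouring S E (card S) h"
    using h assms(2) unfolding proper_colouring_def bij_betw_def inj_on_def by auto
  then show ?thesis unfolding chromatic_number_def
    using LeastI_ex[of "\<lambda>k. Ex (proper_colouring S E k)"] by blast
qed

lemma perfectI:
  assumes "finite A" "\<And>H. H \<subseteq> A \<Longrightarrow> \<exists>f. proper_colouring H E (clique_number H E) f"
    "\<forall>x. \<not> E x x"
  shows "perfect A E"
  unfolding perfect_def
proof (intro allI impI)
  fix H assume H: "H \<subseteq> A"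
  then have fH: "finite H" using assms(1) finite_subset by blast
  obtain f where f: "proper_colouring H E (clique_number H E) f" using assms(2) H by blast
  have 1: "chromatic_number H E \<le> clique_number H E" using chi_le[OF f] .
  obtain g where g: "proper_colouring H E (chromatic_number H E) g" using chi_ex[where E=E, OF fH assms(3)] by blast
  obtain K where K: "K \<subseteq> H" "is_clique E K" "card K = clique_number H E" using cn_ex[OF fH] by blast
  have "clique_number H E \<le> chromatic_number H E"
    using col_clique[OF g K(1,2)] K(3) finite_subset[OF K(1) fH] by simp
  with 1 show "chromatic_number H E = clique_number H E" by simp
qed

lemma perfectD:
  assumes "perfect A E" "H \<subseteq> A" "finite A" "\<forall>x. \<not> E x x"
  shows "\<exists>f. proper_colouring H E (clique_number H E) f"
  using chi_ex[where E=E, OF finite_subset[OF assms(2,3)] assms(4)] assms(1,2) unfolding perfect_def by metis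

lemma perfect_clique:
  assumes "finite A" "is_clique E A" "\<forall>x. \<not> E x x"
  shows "perfect A E"
proof (rule perfectI[where E=E, OF assms(1) _ assms(3)])
  fix H assume H: "H \<subseteq> A"
  then have fH: "finite H" using assms(1) finite_subset by blast
  have cH: "is_clique E H" using clique_sub[OF assms(2) H] .
  obtain h where h: "bij_betw h H {0..<card H}" using ex_bij_betw_finite_nat[OF fH] by blast
  have "card H \<le> clique_number H E" using cn_ge[OF fH order_refl cH] .
  then have "proper_colouring H E (clique_number H E) h"
    using h assms(3) unfolding proper_colouring_def bij_betw_def inj_on_def by fastforce
  then show "\<exists>f. proper_colouring H E (clique_number H E) f" by blast
qed

lemma perfect_edgeless:
  assumes "finite A" "\<forall>x\<in>A. \<forall>y\<in>A. \<not> E x y" "\<forall>x. \<not> E x x"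
  shows "perfect A E"
proof (rule perfectI[where E=E, OF assms(1) _ assms(3)])
  fix H assume H: "H \<subseteq> A"
  then have fH: "finite H" using assms(1) finite_subset by blast
  show "\<exists>f. proper_colouring H E (clique_number H E) f"
  proof (cases "H = {}")
    case True then show ?thesis unfolding proper_colouring_def by simp
  next
    case False
    then obtain x where "x \<in> H" by blast
    then have "card {x} \<le> clique_number H E" by (intro cn_ge[OF fH]) (auto simp: is_clique_def)
    then have "proper_colouring H E (clique_number H E) (\<lambda>_. 0)"
      using H assms(2) unfolding proper_colouring_def by auto
    then show ?thesis by blast
  qed
qed

lemma perfect_union:
  assumes "finite A1" "finite A2" "perfect A1 E" "perfect A2 E"
    "\<forall>a\<in>A1. \<forall>b\<in>A2. \<not> E a b \<and> \<not> E b a" "\<forall>x. \<not> E x x"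
  shows "perfect (A1 \<union> A2) E"
proof (rule perfectI[where E=E, OF _ _ assms(6)])
  show "finite (A1 \<union> A2)" using assms by simp
  fix H assume H: "H \<subseteq> A1 \<union> A2"
  then have fH: "finite H" using assms(1,2) finite_subset by blast
  obtain f1 where f1: "proper_colouring (H \<inter> A1) E (clique_number (H \<inter> A1) E) f1"
    using perfectD[where E=E, OF assms(3) _ assms(1,6)] by blast
  obtain f2 where f2: "proper_colouring (H - A1) E (clique_number (H - A1) E) f2"
    using perfectD[where E=E, OF assms(4) _ assms(2,6)] H by blast
  have c1: "clique_number (H \<inter> A1) E \<le> clique_number H E" by (rule cn_mono[OF fH]) auto
  have c2: "clique_number (H - A1) E \<le> clique_number H E" by (rule cn_mono[OF fH]) auto
  have "proper_colouring H E (clique_number H E) (\<lambda>x. if x \<in> A1 then f1 x else f2 x)"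
    unfolding proper_colouring_def
  proof (intro conjI ballI impI)
    fix x assume "x \<in> H"
    then show "(if x \<in> A1 then f1 x else f2 x) < clique_number H E"
      using f1 f2 c1 c2 unfolding proper_colouring_def by (force intro: less_le_trans)
  next
    fix x y assume xy: "x \<in> H" "y \<in> H" "E x y"
    show "(if x \<in> A1 then f1 x else f2 x) \<noteq> (if y \<in> A1 then f1 y else f2 y)"
      using f1 f2 xy H assms(5) unfolding proper_colouring_def by auto
  qed
  then show "\<exists>f. proper_colouring H E (clique_number H E) f" by blast
qed


lemma path_split:
  assumes "R\<^sup>*\<^sup>* a b" "P a" "\<not> P b"
  shows "\<exists>u v. R\<^sup>*\<^sup>* a u \<and> R u v \<and> P u \<and> \<not> P v"
  using assms
proof (induction rule: rtranclp_induct)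
  case base then show ?case by simp
next
  case (step b c)
  show ?case
  proof (cases "P b")
    case True then show ?thesis using step by blast
  next
    case False then show ?thesis using step by blast
  qed
qed

lemma rtranclp_symm:
  assumes "\<And>a b. R a b \<Longrightarrow> R b a" "R\<^sup>*\<^sup>* a b"
  shows "R\<^sup>*\<^sup>* b a"
  using assms(2)
proof (induction rule: rtranclp_induct)
  case base then show ?case by simp
next
  case (step b c)
  then show ?case using assms(1) by (meson converse_rtranclp_into_rtranclp)
qed

lemma rtranclp_mem:
  assumes "(\<lambda>a b. a \<in> S \<and> b \<in> S \<and> E a b)\<^sup>*\<^sup>* a b" "a \<in> S"
  shows "b \<in> S"
  using assms by (induction rule: rtranclp_induct) auto

lemma lemL:
  assumes sg: "simple_graph V E" and mn: "minimally_non_pd V E" and H: "H \<subset> V"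
  shows "\<exists>A \<subseteq> H. perfect A E \<and>
     (\<forall>K \<subseteq> H. is_clique E K \<and> card K = clique_number H E \<and> K \<noteq> {} \<longrightarrow> K \<inter> A \<noteq> {})"
proof -
  have fV: "finite V" and irr: "\<forall>x. \<not> E x x" using sg unfolding simple_graph_def by auto
  have fH: "finite H" using H fV finite_subset by blast
  show ?thesis
  proof (cases "has_edge H E")
    case True
    have "perfectly_divisible H E" using mn H unfolding minimally_non_pd_def by blast
    then obtain A B where g: "good_partition H E A B" using True unfolding perfectly_divisible_def by blast
    have "\<forall>K \<subseteq> H. is_clique E K \<and> card K = clique_number H E \<and> K \<noteq> {} \<longrightarrow> K \<inter> A \<noteq> {}"
    proof (intro allI impI)
      fix K assume K: "K \<subseteq> H" "is_clique E K \<and> card K = clique_number H E \<and> K \<noteq> {}"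
      show "K \<inter> A \<noteq> {}"
      proof
        assume "K \<inter> A = {}"
        then have "K \<subseteq> B" using K g unfolding good_partition_def by blast
        moreover have "finite B" using g fH unfolding good_partition_def by (metis finite_Un)
        ultimately have "card K \<le> clique_number B E" using K cn_ge by blast
        then show False using K g unfolding good_partition_def by simp
      qed
    qed
    then show ?thesis using g unfolding good_partition_def by blast
  next
    case False
    have "perfect H E" using perfect_edgeless[where E=E, OF fH _ irr] False unfolding has_edge_def by blast
    then show ?thesis by blast
  qed
qed

lemma lemFinal:
  assumes sg: "simple_graph V E" and A: "A \<subseteq> V" "perfect A E"
    and meet: "\<forall>Q \<subseteq> V. is_clique E Q \<and> card Q = clique_number V E \<longrightarrow> Q \<inter> A \<noteq> {}"
    and w: "1 \<le> clique_number V E"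
  shows "good_partition V E A (V - A)"
proof -
  have fV: "finite V" using sg unfolding simple_graph_def by auto
  obtain K where K: "K \<subseteq> V - A" "is_clique E K" "card K = clique_number (V - A) E"
    using cn_ex[of "V - A" E] fV by blast
  have "clique_number (V - A) E \<le> clique_number V E" using cn_mono[OF fV] by blast
  moreover have "clique_number (V - A) E \<noteq> clique_number V E"
    using meet K by auto
  ultimately show ?thesis using A unfolding good_partition_def by auto
qed

lemma maxcl:
  assumes sg: "simple_graph V E" and Q: "Q \<subseteq> V" "is_clique E Q" "card Q = clique_number V E"
    and c: "c \<in> V" "\<forall>q\<in>Q. q \<noteq> c \<longrightarrow> E c q"
  shows "c \<in> Q"
proof (rule ccontr)
  assume nc: "c \<notin> Q"
  have fV: "finite V" and sy: "\<forall>x y. E x y \<longrightarrow> E y x" using sg unfolding simple_graph_def by auto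
  have "is_clique E (insert c Q)" using Q(2) c sy unfolding is_clique_def by auto
  then have "card (insert c Q) \<le> clique_number V E" using cn_ge[OF fV] Q c by auto
  moreover have "card (insert c Q) = card Q + 1" using nc finite_subset[OF Q(1) fV] by simp
  ultimately show False using Q by simp
qed

lemma arith_aux: "(a::nat) \<le> w \<Longrightarrow> a = k + c \<Longrightarrow> q = w \<Longrightarrow> k = x \<Longrightarrow> q = y + c \<Longrightarrow> x \<le> y"
  by linarith

lemma lemM:
  assumes sg: "simple_graph V E" and mn: "minimally_non_pd V E"
    and V: "V = X \<union> Y \<union> C" "X \<inter> Y = {}" "X \<inter> C = {}" "Y \<inter> C = {}" "X \<noteq> {}" "Y \<noteq> {}"
    and noe: "\<forall>x\<in>X. \<forall>y\<in>Y. \<not> E x y" and cC: "is_clique E C"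
    and cmp: "\<forall>c\<in>C. \<forall>x\<in>X. E c x" and w: "1 \<le> clique_number V E"
  shows "\<exists>A \<subseteq> V. perfect A E \<and> (\<forall>Q \<subseteq> V. is_clique E Q \<and> card Q = clique_number V E \<longrightarrow> Q \<inter> A \<noteq> {})"
proof -
  have fV: "finite V" and sy: "\<forall>x y. E x y \<longrightarrow> E y x" and irr: "\<forall>x. \<not> E x x"
    using sg unfolding simple_graph_def by auto
  have sub1: "Y \<union> C \<subset> V" using V by blast
  obtain A0 where A0: "A0 \<subseteq> Y \<union> C" "perfect A0 E"
    "\<forall>K \<subseteq> Y \<union> C. is_clique E K \<and> card K = clique_number (Y \<union> C) E \<and> K \<noteq> {} \<longrightarrow> K \<inter> A0 \<noteq> {}"
    using lemL[OF sg mn sub1] by blast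
  have mYC: "Q \<inter> A0 \<noteq> {}" if "Q \<subseteq> Y \<union> C" "is_clique E Q" "card Q = clique_number V E" for Q
  proof -
    have "card Q \<le> clique_number (Y \<union> C) E" using cn_ge[of "Y \<union> C" Q E] that fV V by simp
    moreover have "clique_number (Y \<union> C) E \<le> clique_number V E" using cn_mono[OF fV] sub1 by blast
    ultimately have "card Q = clique_number (Y \<union> C) E" using that by simp
    moreover have "Q \<noteq> {}" using that w by auto
    ultimately show ?thesis using A0(3) that by blast
  qed
  have QC: "C \<subseteq> Q \<and> Q \<subseteq> X \<union> C \<and> Q \<inter> X \<noteq> {}"
    if Q: "Q \<subseteq> V" "is_clique E Q" "card Q = clique_number V E" "\<not> Q \<subseteq> Y \<union> C" for Q
  proof -
    obtain x where x: "x \<in> Q" "x \<in> X" using Q V by blast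
    have QY: "Q \<inter> Y = {}"
    proof (rule ccontr)
      assume "Q \<inter> Y \<noteq> {}"
      then obtain y where "y \<in> Q" "y \<in> Y" by blast
      then show False using x Q(2) noe V(2) unfolding is_clique_def by (metis disjoint_iff)
    qed
    have "C \<subseteq> Q"
    proof
      fix c assume c: "c \<in> C"
      show "c \<in> Q"
      proof (rule maxcl[OF sg Q(1-3)])
        show "c \<in> V" using c V by blast
        show "\<forall>q\<in>Q. q \<noteq> c \<longrightarrow> E c q"
        proof (intro ballI impI)
          fix q assume q: "q \<in> Q" "q \<noteq> c"
          then have "q \<in> X \<or> q \<in> C" using QY Q V by blast
          then show "E c q"
          proof
            assume "q \<in> X" then show ?thesis using cmp c by blast
          next
            assume "q \<in> C" then show ?thesis using cC c q unfolding is_clique_def by metis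
          qed
        qed
      qed
    qed
    then show ?thesis using QY Q V x by blast
  qed
  show ?thesis
  proof (cases "A0 \<inter> C = {}")
    case False
    have "\<forall>Q \<subseteq> V. is_clique E Q \<and> card Q = clique_number V E \<longrightarrow> Q \<inter> A0 \<noteq> {}"
    proof (intro allI impI)
      fix Q assume Q: "Q \<subseteq> V" "is_clique E Q \<and> card Q = clique_number V E"
      show "Q \<inter> A0 \<noteq> {}"
      proof (cases "Q \<subseteq> Y \<union> C")
        case True then show ?thesis using mYC Q by blast
      next
        case nt: False
        then have "C \<subseteq> Q" using QC Q by blast
        then show ?thesis using False by blast
      qed
    qed
    moreover have "A0 \<subseteq> V" using A0(1) V(1) by auto
    ultimately show ?thesis using A0(2) by blast
  next
    case True
    have sub2: "X \<subset> V" using V by blast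
    have fX: "finite X" using fV V by simp
    obtain A1 where A1: "A1 \<subseteq> X" "perfect A1 E"
      "\<forall>K \<subseteq> X. is_clique E K \<and> card K = clique_number X E \<and> K \<noteq> {} \<longrightarrow> K \<inter> A1 \<noteq> {}"
      using lemL[OF sg mn sub2] by blast
    have A0Y: "A0 \<subseteq> Y" using A0(1) True by blast
    have pA: "perfect (A0 \<union> A1) E"
    proof (rule perfect_union[where E=E])
      show "finite A0" using A0Y fV V finite_subset by blast
      show "finite A1" using A1 fX finite_subset by blast
      show "perfect A0 E" "perfect A1 E" using A0 A1 by auto
      show "\<forall>a\<in>A0. \<forall>b\<in>A1. \<not> E a b \<and> \<not> E b a"
      proof (intro ballI conjI notI)
        fix a b assume ab: "a \<in> A0" "b \<in> A1"
        then have "a \<in> Y" "b \<in> X" using A0Y A1(1) by auto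
        then have nb: "\<not> E b a" using noe by blast
        show "E b a \<Longrightarrow> False" using nb by simp
        show "E a b \<Longrightarrow> False" using nb sy by blast
      qed
      show "\<forall>x. \<not> E x x" using irr .
    qed
    have "\<forall>Q \<subseteq> V. is_clique E Q \<and> card Q = clique_number V E \<longrightarrow> Q \<inter> (A0 \<union> A1) \<noteq> {}"
    proof (intro allI impI)
      fix Q assume Q: "Q \<subseteq> V" "is_clique E Q \<and> card Q = clique_number V E"
      show "Q \<inter> (A0 \<union> A1) \<noteq> {}"
      proof (cases "Q \<subseteq> Y \<union> C")
        case True then show ?thesis using mYC Q by blast
      next
        case nt: False
        then have q: "C \<subseteq> Q" "Q \<subseteq> X \<union> C" "Q \<inter> X \<noteq> {}" using QC Q by auto
        have fQ: "finite Q" using Q fV finite_subset by blast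
        have fC: "finite C" using fV V by simp
        have Qeq: "Q = (Q \<inter> X) \<union> C" using q by blast
        have cQ: "card Q = card (Q \<inter> X) + card C"
        proof -
          have "(Q \<inter> X) \<inter> C = {}" using V(3) by blast
          then have e1: "card ((Q \<inter> X) \<union> C) = card (Q \<inter> X) + card C"
            by (rule card_Un_disjoint[OF finite_Int[OF disjI1[OF fQ]] fC])
          have e2: "card Q = card ((Q \<inter> X) \<union> C)" by (rule arg_cong[OF Qeq])
          show ?thesis using e2 e1 by (rule trans)
        qed
        have kX: "is_clique E (Q \<inter> X)" using clique_sub Q by blast
        have le1: "card (Q \<inter> X) \<le> clique_number X E" using cn_ge[OF fX _ kX] by blast
        obtain K' where K': "K' \<subseteq> X" "is_clique E K'" "card K' = clique_number X E"
          using cn_ex[OF fX] by blast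
        have "is_clique E (K' \<union> C)" unfolding is_clique_def
        proof (intro ballI impI)
          fix a b assume ab: "a \<in> K' \<union> C" "b \<in> K' \<union> C" "a \<noteq> b"
          show "E a b"
          proof (cases "a \<in> K'")
            case aK: True
            show ?thesis
            proof (cases "b \<in> K'")
              case True then show ?thesis using aK K'(2) ab(3) unfolding is_clique_def by blast
            next
              case False then have "b \<in> C" using ab by blast
              then have "E b a" using cmp aK K'(1) by blast
              then show ?thesis using sy by blast
            qed
          next
            case aC: False
            then have aC: "a \<in> C" using ab by blast
            show ?thesis
            proof (cases "b \<in> K'")
              case True then show ?thesis using cmp aC K'(1) by blast
            next
              case False then have "b \<in> C" using ab by blast
              then show ?thesis using aC cC ab(3) unfolding is_clique_def by blast
            qed
          qed
        qed
        then have "card (K' \<union> C) \<le> clique_number V E" using cn_ge[OF fV] K'(1) V by blast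
        moreover have "card (K' \<union> C) = card K' + card C"
        proof -
          have "finite K'" using K'(1) fX finite_subset by blast
          moreover have "K' \<inter> C = {}" using K'(1) V(3) by blast
          ultimately show ?thesis using card_Un_disjoint[of K' C] fC by simp
        qed
        moreover have "card Q = clique_number V E" using Q(2) by (rule conjunct2)
        ultimately have "clique_number X E \<le> card (Q \<inter> X)" by (rule arith_aux[OF _ _ _ K'(3) cQ])
        then have "card (Q \<inter> X) = clique_number X E" using le1 by simp
        then have "(Q \<inter> X) \<inter> A1 \<noteq> {}" using A1(3) kX q(3) by blast
        then show ?thesis by blast
      qed
    qed
    moreover have "A0 \<union> A1 \<subseteq> V" using A0(1) A1(1) V(1) by auto
    ultimately show ?thesis using pA by blast
  qed
qed


lemma all5: "(\<forall>i<(5::nat). P i) \<longleftrightarrow> P 0 \<and> P 1 \<and> P 2 \<and> P 3 \<and> P 4"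
  by (auto simp: less_Suc_eq eval_nat_numeral)

lemma p5_list:
  assumes "\<forall>x. \<not> E x x" "E a b" "E b a" "E b c" "E c b" "E c d" "E d c" "E d e" "E e d"
   "\<not> E a c" "\<not> E c a" "\<not> E a d" "\<not> E d a" "\<not> E a e" "\<not> E e a"
   "\<not> E b d" "\<not> E d b" "\<not> E b e" "\<not> E e b" "\<not> E c e" "\<not> E e c"
   "a \<in> V" "b \<in> V" "c \<in> V" "d \<in> V" "e \<in> V"
  shows "induced_P5 V E"
proof -
  have d: "distinct [a,b,c,d,e]" using assms by auto
  have "inj_on ((!) [a,b,c,d,e]) {0..<5}" by (rule inj_on_nth[OF d]) auto
  moreover have "\<forall>i<5. [a,b,c,d,e] ! i \<in> V" unfolding all5 using assms by simp
  moreover have "\<forall>i<(5::nat). \<forall>j<(5::nat). E ([a,b,c,d,e] ! i) ([a,b,c,d,e] ! j) \<longleftrightarrow> (i = j + 1 \<or> j = i + 1)"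
    unfolding all5 using assms by simp
  ultimately show ?thesis unfolding induced_P5_def by blast
qed

lemma cut_structure:
  assumes sg: "simple_graph V E" and p5: "P5_free V E" and cc: "clique_cutset V E C"
    and mincard: "\<forall>C'. clique_cutset V E C' \<longrightarrow> card C \<le> card C'"
  shows "\<exists>X Y. V = X \<union> Y \<union> C \<and> X \<inter> Y = {} \<and> X \<inter> C = {} \<and> Y \<inter> C = {} \<and> X \<noteq> {} \<and> Y \<noteq> {}
     \<and> (\<forall>x\<in>X. \<forall>y\<in>Y. \<not> E x y) \<and> (\<forall>c\<in>C. (\<forall>x\<in>X. E c x) \<or> (\<forall>y\<in>Y. E c y))"
proof -
  have fV: "finite V" and sy: "\<forall>x y. E x y \<longrightarrow> E y x" and irr: "\<forall>x. \<not> E x x"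
    using sg unfolding simple_graph_def by auto
  have CV: "C \<subseteq> V" and cC: "is_clique E C" and dis: "disconnected (V - C) E"
    using cc unfolding clique_cutset_def by auto
  have fC: "finite C" using CV fV finite_subset by blast
  define R where "R = (\<lambda>a b. a \<in> V - C \<and> b \<in> V - C \<and> E a b)"
  have syr: "\<And>x y. E x y \<Longrightarrow> E y x" using sy by blast
  have Rsym: "\<And>a b. R a b \<Longrightarrow> R b a" using sy unfolding R_def by auto
  obtain x0 y0 where x0: "x0 \<in> V - C" and y0: "y0 \<in> V - C" and nc: "\<not> R\<^sup>*\<^sup>* x0 y0"
    using dis unfolding disconnected_def connected_in_def R_def by blast
  define X where "X = {z \<in> V - C. R\<^sup>*\<^sup>* x0 z}"
  define Y where "Y = V - C - X"
  have x0X: "x0 \<in> X" using x0 unfolding X_def by simp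
  have y0Y: "y0 \<in> Y" using y0 nc unfolding Y_def X_def by simp
  have reachX: "R\<^sup>*\<^sup>* x0 z \<Longrightarrow> z \<in> X" for z
    using rtranclp_mem[of "V - C" E x0 z] x0 unfolding X_def R_def by auto
  have noe: "\<forall>x\<in>X. \<forall>y\<in>Y. \<not> E x y"
  proof (intro ballI notI)
    fix x y assume xy: "x \<in> X" "y \<in> Y" "E x y"
    then have "R x y" unfolding R_def X_def Y_def by auto
    then have "R\<^sup>*\<^sup>* x0 y" using xy(1) unfolding X_def by auto
    then show False using reachX xy(2) unfolding Y_def by blast
  qed
  have key: "\<forall>c\<in>C. (\<forall>x\<in>X. E c x) \<or> (\<forall>y\<in>Y. E c y)"
  proof
    fix c assume c: "c \<in> C"
    show "(\<forall>x\<in>X. E c x) \<or> (\<forall>y\<in>Y. E c y)"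
    proof (rule ccontr)
      assume "\<not> ((\<forall>x\<in>X. E c x) \<or> (\<forall>y\<in>Y. E c y))"
      then obtain b y where b: "b \<in> X" "\<not> E c b" and y: "y \<in> Y" "\<not> E c y" by blast
      define C' where "C' = C - {c}"
      have "0 < card C" using fC c card_gt_0_iff by blast
      then have "card C' < card C" unfolding C'_def using fC c by simp
      then have "\<not> clique_cutset V E C'"
      proof -
        assume lt: "card C' < card C"
        show ?thesis
        proof
          assume "clique_cutset V E C'"
          then have "card C \<le> card C'" using mincard by blast
          then show False using lt by simp
        qed
      qed
      moreover have "C' \<subseteq> V" "is_clique E C'" unfolding C'_def using CV clique_sub[OF cC] by auto
      ultimately have conn: "\<not> disconnected (V - C') E" unfolding clique_cutset_def by blast
      define R' where "R' = (\<lambda>a b. a \<in> V - C' \<and> b \<in> V - C' \<and> E a b)"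
      have yV: "y \<in> V - C" using y unfolding Y_def by auto
      have "R'\<^sup>*\<^sup>* x0 y" using conn x0 yV unfolding disconnected_def connected_in_def R'_def C'_def by auto
      note path = this
      define Yy where "Yy = {z \<in> V - C. R\<^sup>*\<^sup>* y z}"
      have yYy: "y \<in> Yy" using yV unfolding Yy_def by simp
      have reachY: "R\<^sup>*\<^sup>* y z \<Longrightarrow> z \<in> Yy" for z
        using rtranclp_mem[of "V - C" E y z] yV unfolding Yy_def R_def by auto
      have yX: "y \<notin> X" using y unfolding Y_def by simp
      have notboth: "z \<in> X \<Longrightarrow> z \<in> Yy \<Longrightarrow> False" for z
      proof -
        assume "z \<in> X" "z \<in> Yy"
        then have "R\<^sup>*\<^sup>* x0 z" "R\<^sup>*\<^sup>* z y" using rtranclp_symm[of R y z, OF Rsym] unfolding X_def Yy_def by auto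
        then have "R\<^sup>*\<^sup>* x0 y" by simp
        then show False using reachX yX by blast
      qed
      have XYy: "z \<in> X \<Longrightarrow> w \<in> Yy \<Longrightarrow> \<not> E z w" for z w
      proof
        assume zw: "z \<in> X" "w \<in> Yy" "E z w"
        then have "R z w" unfolding R_def X_def Yy_def by auto
        then have "R\<^sup>*\<^sup>* x0 w" using zw(1) unfolding X_def by auto
        then show False using reachX notboth zw(2) by blast
      qed
      obtain u v where uv: "R'\<^sup>*\<^sup>* x0 u" "R' u v" "u \<in> X" "v \<notin> X"
        using path_split[of R' x0 y "\<lambda>z. z \<in> X", OF path] x0X yX by blast
      have "v = c"
      proof (rule ccontr)
        assume "v \<noteq> c"
        then have "v \<in> V - C" using uv(2) unfolding R'_def C'_def by auto
        then have "R u v" using uv(2,3) unfolding R_def R'_def X_def by auto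
        then have "R\<^sup>*\<^sup>* x0 v" using uv(3) unfolding X_def by auto
        then show False using reachX uv(4) by blast
      qed
      then have "E u c" using uv(2) unfolding R'_def by simp
      then have Eca: "E c u" by (rule syr)
      have x0Yy: "x0 \<notin> Yy" using notboth x0X by blast
      obtain u' v' where uv': "R'\<^sup>*\<^sup>* x0 u'" "R' u' v'" "u' \<notin> Yy" "v' \<in> Yy"
        using path_split[of R' x0 y "\<lambda>z. z \<notin> Yy", OF path] x0Yy yYy by blast
      have "u' = c"
      proof (rule ccontr)
        assume "u' \<noteq> c"
        then have "u' \<in> V - C" using uv'(2) unfolding R'_def C'_def by auto
        moreover have "E v' u'" using uv'(2) syr unfolding R'_def by blast
        moreover have "v' \<in> V - C" using uv'(4) unfolding Yy_def by simp
        ultimately have "R v' u'" unfolding R_def by simp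
        then have "R\<^sup>*\<^sup>* y u'" using uv'(4) unfolding Yy_def by auto
        then show False using reachY uv'(3) by blast
      qed
      then have Eca': "E c v'" using uv'(2) unfolding R'_def by auto
      have "R\<^sup>*\<^sup>* u b"
      proof -
        have "R\<^sup>*\<^sup>* u x0" using rtranclp_symm[of R x0 u, OF Rsym] uv(3) unfolding X_def by auto
        moreover have "R\<^sup>*\<^sup>* x0 b" using b unfolding X_def by auto
        ultimately show ?thesis by simp
      qed
      then obtain p q where pq: "R\<^sup>*\<^sup>* u p" "R p q" "E c p" "\<not> E c q"
        using path_split[of R u b "E c"] Eca b by blast
      have x0u: "R\<^sup>*\<^sup>* x0 u" using uv(3) unfolding X_def by simp
      have x0p: "R\<^sup>*\<^sup>* x0 p" using rtranclp_trans[OF x0u pq(1)] .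
      have pX: "p \<in> X" using reachX[OF x0p] .
      have qX: "q \<in> X" using reachX[OF rtranclp.rtrancl_into_rtrancl[OF x0p pq(2)]] .
      have "R\<^sup>*\<^sup>* v' y" using rtranclp_symm[of R y v', OF Rsym] uv'(4) unfolding Yy_def by auto
      then obtain p' q' where pq': "R\<^sup>*\<^sup>* v' p'" "R p' q'" "E c p'" "\<not> E c q'"
        using path_split[of R v' y "E c"] Eca' y by blast
      have yv: "R\<^sup>*\<^sup>* y v'" using uv'(4) unfolding Yy_def by simp
      have yp: "R\<^sup>*\<^sup>* y p'" using rtranclp_trans[OF yv pq'(1)] .
      have pY: "p' \<in> Yy" using reachY[OF yp] .
      have qY: "q' \<in> Yy" using reachY[OF rtranclp.rtrancl_into_rtrancl[OF yp pq'(2)]] .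
      have nXY: "\<not> E z w \<and> \<not> E w z" if "z \<in> X" "w \<in> Yy" for z w
        using XYy[OF that] syr[of w z] by blast
      have Epq: "E p q" using pq(2) unfolding R_def by auto
      have Epq': "E p' q'" using pq'(2) unfolding R_def by auto
      have XV: "X \<subseteq> V - C" and YyV: "Yy \<subseteq> V - C" unfolding X_def Yy_def by auto
      have "induced_P5 V E"
      proof (rule p5_list[of E q p c p' q' V])
        show "\<forall>x. \<not> E x x" using irr .
        show "E q p" using syr[OF Epq] .
        show "E p q" using Epq .
        show "E p c" using syr[OF pq(3)] .
        show "E c p" using pq(3) .
        show "E c p'" using pq'(3) .
        show "E p' c" using syr[OF pq'(3)] .
        show "E p' q'" using Epq' .
        show "E q' p'" using syr[OF Epq'] .
        show "\<not> E q c" using pq(4) syr[of q c] by blast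
        show "\<not> E q' c" using pq'(4) syr[of q' c] by blast
        show "\<not> E c q" "\<not> E c q'" using pq(4) pq'(4) by auto
        show "\<not> E p' q" "\<not> E q p'" "\<not> E q' q" "\<not> E q q'"
          "\<not> E p' p" "\<not> E p p'" "\<not> E q' p" "\<not> E p q'"
          using nXY[OF qX pY] nXY[OF qX qY] nXY[OF pX pY] nXY[OF pX qY] by auto
        show "q \<in> V" "p \<in> V" "c \<in> V" "p' \<in> V" "q' \<in> V" using pX qX pY qY XV YyV c CV by auto
      qed
      then show False using p5 unfolding P5_free_def by blast
    qed
  qed
  have "V = X \<union> Y \<union> C" using CV unfolding X_def Y_def by auto
  moreover have "X \<inter> Y = {}" "X \<inter> C = {}" "Y \<inter> C = {}" unfolding X_def Y_def by auto
  ultimately show ?thesis using x0X y0Y noe key by blast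
qed

theorem theorem2:
  fixes V :: "'a set" and E :: "'a \<Rightarrow> 'a \<Rightarrow> bool"
  assumes "simple_graph V E"
    and "P5_free V E"
    and "minimally_non_pd V E"
  shows "\<not> (\<exists>C. clique_cutset V E C)"
proof
  assume "\<exists>C. clique_cutset V E C"
  then obtain C0 where "clique_cutset V E C0" by blast
  then obtain C where cc: "clique_cutset V E C" and mincard: "\<forall>C'. clique_cutset V E C' \<longrightarrow> card C \<le> card C'"
    using ex_has_least_nat[of "clique_cutset V E" C0 card] by blast
  have sg: "simple_graph V E" using assms(1) .
  have mn: "minimally_non_pd V E" using assms(3) .
  have fV: "finite V" and sy: "\<forall>x y. E x y \<longrightarrow> E y x" and irr: "\<forall>x. \<not> E x x"
    using sg unfolding simple_graph_def by auto
  obtain X Y where V: "V = X \<union> Y \<union> C" "X \<inter> Y = {}" "X \<inter> C = {}" "Y \<inter> C = {}" "X \<noteq> {}" "Y \<noteq> {}"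
    and noe: "\<forall>x\<in>X. \<forall>y\<in>Y. \<not> E x y" and key: "\<forall>c\<in>C. (\<forall>x\<in>X. E c x) \<or> (\<forall>y\<in>Y. E c y)"
    using cut_structure[OF sg assms(2) cc mincard] by blast
  have cC: "is_clique E C" and CV: "C \<subseteq> V" using cc unfolding clique_cutset_def by auto
  obtain H where H: "H \<subseteq> V" "has_edge H E" "\<not> (\<exists>A B. good_partition H E A B)"
    using mn unfolding minimally_non_pd_def perfectly_divisible_def by blast
  have HV: "H = V"
  proof (rule ccontr)
    assume "H \<noteq> V"
    then have "perfectly_divisible H E" using mn H(1) unfolding minimally_non_pd_def by blast
    then show False using H unfolding perfectly_divisible_def by blast
  qed
  have w: "1 \<le> clique_number V E"
  proof -
    obtain x where "x \<in> V" using H HV unfolding has_edge_def by blast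
    then have "card {x} \<le> clique_number V E" by (intro cn_ge[OF fV]) (auto simp: is_clique_def)
    then show ?thesis by simp
  qed
  have "\<exists>A \<subseteq> V. perfect A E \<and> (\<forall>Q \<subseteq> V. is_clique E Q \<and> card Q = clique_number V E \<longrightarrow> Q \<inter> A \<noteq> {})"
  proof (cases "\<forall>c\<in>C. \<forall>x\<in>X. E c x")
    case True
    show ?thesis by (rule lemM[OF sg mn V noe cC True w])
  next
    case nX: False
    show ?thesis
    proof (cases "\<forall>c\<in>C. \<forall>y\<in>Y. E c y")
      case True
      have V': "V = Y \<union> X \<union> C" "Y \<inter> X = {}" using V by auto
      have noe': "\<forall>x\<in>Y. \<forall>y\<in>X. \<not> E x y" using noe sy by blast
      show ?thesis by (rule lemM[OF sg mn V'(1,2) V(4,3,6,5) noe' cC True w])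
    next
      case False
      then obtain v where v: "v \<in> C" "\<not> (\<forall>y\<in>Y. E v y)" by blast
      then have vX: "\<forall>x\<in>X. E v x" using key by blast
      obtain u where u: "u \<in> C" "\<not> (\<forall>x\<in>X. E u x)" using nX by blast
      then have uY: "\<forall>y\<in>Y. E u y" using key by blast
      have pA: "perfect {u, v} E"
        by (rule perfect_clique[where E=E]) (use clique_sub[OF cC] u v irr in auto)
      have "\<forall>Q \<subseteq> V. is_clique E Q \<and> card Q = clique_number V E \<longrightarrow> Q \<inter> {u, v} \<noteq> {}"
      proof (intro allI impI)
        fix Q assume Q: "Q \<subseteq> V" "is_clique E Q \<and> card Q = clique_number V E"
        show "Q \<inter> {u, v} \<noteq> {}"
        proof (cases "Q \<inter> Y = {}")
          case True
          have "v \<in> Q"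
          proof (rule maxcl[OF sg Q(1)])
            show "is_clique E Q" "card Q = clique_number V E" using Q by auto
            show "v \<in> V" using v CV by auto
            show "\<forall>q\<in>Q. q \<noteq> v \<longrightarrow> E v q"
            proof (intro ballI impI)
              fix q assume q: "q \<in> Q" "q \<noteq> v"
              then have "q \<in> X \<or> q \<in> C" using True Q V by blast
              then show "E v q"
              proof
                assume "q \<in> X" then show ?thesis using vX by blast
              next
                assume "q \<in> C" then show ?thesis using cC v q unfolding is_clique_def by metis
              qed
            qed
          qed
          then show ?thesis by blast
        next
          case False
          then obtain y where y: "y \<in> Q" "y \<in> Y" by blast
          have QX: "Q \<inter> X = {}"
          proof (rule ccontr)
            assume "Q \<inter> X \<noteq> {}"
            then obtain x where "x \<in> Q" "x \<in> X" by blast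
            then show False using y Q noe V(2) unfolding is_clique_def by (metis disjoint_iff)
          qed
          have "u \<in> Q"
          proof (rule maxcl[OF sg Q(1)])
            show "is_clique E Q" "card Q = clique_number V E" using Q by auto
            show "u \<in> V" using u CV by auto
            show "\<forall>q\<in>Q. q \<noteq> u \<longrightarrow> E u q"
            proof (intro ballI impI)
              fix q assume q: "q \<in> Q" "q \<noteq> u"
              then have "q \<in> Y \<or> q \<in> C" using QX Q V by blast
              then show "E u q"
              proof
                assume "q \<in> Y" then show ?thesis using uY by blast
              next
                assume "q \<in> C" then show ?thesis using cC u q unfolding is_clique_def by metis
              qed
            qed
          qed
          then show ?thesis by blast
        qed
      qed
      moreover have "{u, v} \<subseteq> V" using u v CV by auto
      ultimately show ?thesis using pA by blast
    qed
  qed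
  then obtain A where A: "A \<subseteq> V" "perfect A E"
    "\<forall>Q \<subseteq> V. is_clique E Q \<and> card Q = clique_number V E \<longrightarrow> Q \<inter> A \<noteq> {}" by blast
  have "good_partition V E A (V - A)" by (rule lemFinal[OF sg A w])
  then show False using H(3) HV by blast
qed

end
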